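(* Let $\gamma>0$, $\beta>0$, $b\in\mathbb{R}$ and fix $t>0$. For $x_3>0$ define \[ u(x_3,t)=\frac{2e^{-bt}}{4\pi\gamma t}\Big[\frac{e^{-\frac{x_3^2}{4\gamma t}}}{\sqrt{4\pi\gamma t}}-\frac{\beta}{2\gamma}e^{\frac{\beta}{\gamma}(x_3+\beta t)}\mathrm{erfc}\Big(\frac{x_3+2\beta t}{\sqrt{4\gamma t}}\Big)\Big],\qquad u_{\rm EBC}(x_3,t)=\frac{e^{-bt}}{(4\pi\gamma t)^{3/2}}\Big(e^{-\frac{x_3^2}{4\gamma t}}-e^{-\frac{(x_3+2\gamma/\beta)^2}{4\gamma t}}\Big). \] Then $u(x_3,t)\neq0$ for all sufficiently large $x_3$, and \[ \lim_{x_3\to\infty}\left|\frac{u_{\rm EBC}(x_3,t)-u(x_3,t)}{u(x_3,t)}\right|=\frac12 . \]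
   Context: $\mathrm{erfc}(\xi)=\frac{2}{\sqrt\pi}\int_\xi^\infty e^{-s^2}ds$. Here $u$ is the exact solution at $x_1=x_2=0$ of the half-space Robin problem with boundary source $\delta(x_1)\delta(x_2)\delta(t)$, and $u_{\rm EBC}$ is the extrapolated-boundary approximation with extrapolation distance $\gamma/\beta$. *)

theory Defs
  imports "HOL-Analysis.Analysis"
begin

definition erfc :: "real \<Rightarrow> real" where
  "erfc \<xi> = 2 / sqrt pi * integral {\<xi>..} (\<lambda>s. exp (- s\<^sup>2))"

text \<open>Exact half-space Robin solution at x1 = x2 = 0.\<close>
definition u_exact :: "real \<Rightarrow> real \<Rightarrow> real \<Rightarrow> real \<Rightarrow> real \<Rightarrow> real" where
  "u_exact \<gamma> \<beta> b x3 t =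
     2 * exp (- b * t) / (4 * pi * \<gamma> * t) *
     (exp (- x3\<^sup>2 / (4 * \<gamma> * t)) / sqrt (4 * pi * \<gamma> * t)
      - \<beta> / (2 * \<gamma>) * exp (\<beta> / \<gamma> * (x3 + \<beta> * t))
          * erfc ((x3 + 2 * \<beta> * t) / sqrt (4 * \<gamma> * t)))"

text \<open>Extrapolated-boundary approximation with extrapolation distance gamma/beta.\<close>
definition u_EBC :: "real \<Rightarrow> real \<Rightarrow> real \<Rightarrow> real \<Rightarrow> real \<Rightarrow> real" where
  "u_EBC \<gamma> \<beta> b x3 t =
     exp (- b * t) / (4 * pi * \<gamma> * t) powr (3/2) *
     (exp (- x3\<^sup>2 / (4 * \<gamma> * t)) - exp (- (x3 + 2 * \<gamma> / \<beta>)\<^sup>2 / (4 * \<gamma> * t)))"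

end

theory Submission imports Defs "HOL-Real_Asymp.Real_Asymp" begin

lemma gauss_tail_int:
  fixes \<xi> :: real assumes "\<xi> > 0"
  shows "((\<lambda>s. s / \<xi> * exp (- s\<^sup>2)) has_integral exp (- \<xi>\<^sup>2) / (2 * \<xi>)) {\<xi>..}"
proof (intro has_integral_to_inf integrable_continuous_interval continuous_intros)
  have H: "((\<lambda>s. s / \<xi> * exp (- s\<^sup>2)) has_integral (-exp (-y\<^sup>2)/(2*\<xi>) - (-exp (-\<xi>\<^sup>2)/(2*\<xi>)))) {\<xi>..y}"
    if "y \<ge> \<xi>" for y
    using that \<open>\<xi> > 0\<close>
    by (intro fundamental_theorem_of_calculus)
       (auto intro!: derivative_eq_intros
             simp flip: has_real_derivative_iff_has_vector_derivative simp: field_simps power2_eq_square)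
  have "\<forall>\<^sub>F y in at_top. integral {\<xi>..y} (\<lambda>s. s / \<xi> * exp (- s\<^sup>2)) = -exp (-y\<^sup>2)/(2*\<xi>) + exp (-\<xi>\<^sup>2)/(2*\<xi>)"
    unfolding eventually_at_top_linorder
    by (intro exI[of _ \<xi>] allI impI) (use integral_unique[OF H] in simp)
  moreover have "((\<lambda>y::real. -exp (-y\<^sup>2)/(2*\<xi>) + exp (-\<xi>\<^sup>2)/(2*\<xi>)) \<longlongrightarrow> exp (-\<xi>\<^sup>2)/(2*\<xi>)) at_top"
  proof -
    have "((\<lambda>y::real. exp (-y\<^sup>2)) \<longlongrightarrow> 0) at_top" by real_asymp
    then have "((\<lambda>y::real. -exp (-y\<^sup>2)/(2*\<xi>) + exp (-\<xi>\<^sup>2)/(2*\<xi>)) \<longlongrightarrow> -0/(2*\<xi>) + exp (-\<xi>\<^sup>2)/(2*\<xi>)) at_top"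
      by (intro tendsto_intros) (use assms in auto)
    then show ?thesis by simp
  qed
  ultimately show "((\<lambda>y. integral {\<xi>..y} (\<lambda>s. s / \<xi> * exp (- s\<^sup>2))) \<longlongrightarrow> exp (-\<xi>\<^sup>2)/(2*\<xi>)) at_top"
    by (simp add: filterlim_cong)
qed (use assms in auto)

lemma erfc_bounds:
  fixes \<xi> :: real assumes "\<xi> > 0"
  shows "0 \<le> erfc \<xi>" "erfc \<xi> \<le> exp (- \<xi>\<^sup>2) / (\<xi> * sqrt pi)"
proof -
  have nn: "0 \<le> integral {\<xi>..} (\<lambda>s. exp (- s\<^sup>2))"
  proof (cases "(\<lambda>s. exp (- s\<^sup>2)) integrable_on {\<xi>..}")
    case True then show ?thesis by (intro integral_nonneg) auto
  next
    case False then show ?thesis by (simp add: not_integrable_integral)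
  qed
  have le: "integral {\<xi>..} (\<lambda>s::real. exp (- s\<^sup>2)) \<le> exp (- \<xi>\<^sup>2) / (2 * \<xi>)"
  proof (cases "(\<lambda>s. exp (- s\<^sup>2)) integrable_on {\<xi>..}")
    case True
    have "integral {\<xi>..} (\<lambda>s::real. exp (- s\<^sup>2)) \<le> integral {\<xi>..} (\<lambda>s. s / \<xi> * exp (- s\<^sup>2))"
    proof (rule integral_le[OF True])
      show "(\<lambda>s. s / \<xi> * exp (- s\<^sup>2)) integrable_on {\<xi>..}" using gauss_tail_int[OF assms] by blast
      fix s assume "s \<in> {\<xi>..}"
      then have "1 \<le> s / \<xi>" using assms by (simp add: field_simps)
      then show "exp (- s\<^sup>2) \<le> s / \<xi> * exp (- s\<^sup>2)"
        using mult_right_mono[of 1 "s/\<xi>" "exp (- s\<^sup>2)"] by simp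
    qed
    also have "\<dots> = exp (- \<xi>\<^sup>2) / (2 * \<xi>)" using gauss_tail_int[OF assms] by (rule integral_unique)
    finally show ?thesis .
  next
    case False then show ?thesis using assms by (simp add: not_integrable_integral)
  qed
  show "0 \<le> erfc \<xi>" unfolding erfc_def using nn by simp
  have "erfc \<xi> \<le> 2 / sqrt pi * (exp (- \<xi>\<^sup>2) / (2 * \<xi>))"
    unfolding erfc_def by (rule mult_left_mono[OF le]) simp
  also have "\<dots> = exp (- \<xi>\<^sup>2) / (\<xi> * sqrt pi)" using assms by (simp add: field_simps)
  finally show "erfc \<xi> \<le> exp (- \<xi>\<^sup>2) / (\<xi> * sqrt pi)" .
qed


lemma ratio_alg:
  fixes K P Q F a e :: real
  assumes "K > 0" "P > 0" "Q > 0" "F > 0" "a \<noteq> 0"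
  shows "(K / (P * Q) * F * e - 2 * K / P * (F / Q) * a) / (2 * K / P * (F / Q) * a) = 1/2 * e / a - 1"
  using assms by (simp add: field_simps)

theorem mainTheorem6:
  fixes \<gamma> \<beta> b t :: real
  assumes "\<gamma> > 0" and "\<beta> > 0" and "t > 0"
  shows "(\<forall>\<^sub>F x3 in at_top. u_exact \<gamma> \<beta> b x3 t \<noteq> 0) \<and>
         ((\<lambda>x3. \<bar>(u_EBC \<gamma> \<beta> b x3 t - u_exact \<gamma> \<beta> b x3 t) / u_exact \<gamma> \<beta> b x3 t\<bar>)
            \<longlongrightarrow> 1/2) at_top"
proof -
  define T where "T = 4 * \<gamma> * t"
  define P where "P = 4 * pi * \<gamma> * t"
  define K where "K = exp (- b * t)"
  define F where "F = (\<lambda>x::real. exp (- x\<^sup>2 / T))"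
  define z where "z = (\<lambda>x::real. (x + 2 * \<beta> * t) / sqrt T)"
  define B where "B = (\<lambda>x. \<beta> / (2 * \<gamma>) * exp (\<beta> / \<gamma> * (x + \<beta> * t)) * erfc (z x))"
  define R where "R = (\<lambda>x. B x * sqrt P / F x)"
  define c where "c = 2 * \<gamma> / \<beta>"
  define E where "E = (\<lambda>x. exp (- (x + c)\<^sup>2 / T) / F x)"
  define M where "M = \<beta> / (2 * \<gamma>) * sqrt P * sqrt T / sqrt pi"
  have T: "T > 0" and P: "P > 0" and K: "K > 0" and c: "c > 0"
    using assms by (auto simp: T_def P_def K_def c_def)
  have Fpos: "F x > 0" for x by (simp add: F_def)
  have sP: "sqrt P > 0" using P by simp
  have Pp: "P powr (3/2) = P * sqrt P"
  proof -
    have "P powr (3/2) = P powr (1 + 1/2)" by simp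
    also have "\<dots> = P powr 1 * P powr (1/2)" by (rule powr_add)
    also have "\<dots> = P * P powr (1/2)" using P by simp
    also have "\<dots> = P * sqrt P" using P by (simp add: powr_half_sqrt)
    finally show ?thesis .
  qed
  have ue0: "u_exact \<gamma> \<beta> b x t = 2 * K / P * (F x / sqrt P - B x)" for x
    by (simp add: u_exact_def K_def P_def F_def B_def z_def T_def)
  have ue: "u_exact \<gamma> \<beta> b x t = 2 * K / P * (F x / sqrt P) * (1 - R x)" for x
    unfolding ue0 R_def using Fpos[of x] sP by (simp add: field_simps)
  have ub0: "u_EBC \<gamma> \<beta> b x t = K / P powr (3/2) * (F x - exp (- (x + c)\<^sup>2 / T))" for x
    by (simp add: u_EBC_def K_def P_def F_def c_def T_def)
  have ub: "u_EBC \<gamma> \<beta> b x t = K / (P * sqrt P) * F x * (1 - E x)" for x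
    unfolding ub0 E_def Pp using Fpos[of x] sP by (simp add: field_simps)
  have Rb: "0 \<le> R x \<and> R x \<le> M / (x + 2 * \<beta> * t)" if x: "x > 0" for x
  proof -
    have zp: "z x > 0" using x assms T by (simp add: z_def add_pos_pos)
    have id: "exp (\<beta> / \<gamma> * (x + \<beta> * t)) * exp (- (z x)\<^sup>2) = F x"
    proof -
      have "(z x)\<^sup>2 = (x + 2 * \<beta> * t)\<^sup>2 / T" using T by (simp add: z_def power_divide)
      then have "\<beta> / \<gamma> * (x + \<beta> * t) + - (z x)\<^sup>2 = - x\<^sup>2 / T"
        using assms by (simp add: T_def field_simps power2_eq_square)
      then show ?thesis by (simp add: F_def flip: exp_add)
    qed
    have e1: "0 \<le> erfc (z x)" and e2: "erfc (z x) \<le> exp (- (z x)\<^sup>2) / (z x * sqrt pi)"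
      using erfc_bounds[OF zp] by auto
    have "0 \<le> B x" using e1 assms by (simp add: B_def)
    then have r0: "0 \<le> R x" using Fpos[of x] sP by (simp add: R_def)
    have "B x \<le> \<beta> / (2 * \<gamma>) * exp (\<beta> / \<gamma> * (x + \<beta> * t)) * (exp (- (z x)\<^sup>2) / (z x * sqrt pi))"
      unfolding B_def using e2 assms by (intro mult_left_mono) auto
    also have "\<dots> = \<beta> / (2 * \<gamma>) * F x / (z x * sqrt pi)" by (simp flip: id)
    finally have "R x \<le> \<beta> / (2 * \<gamma>) * F x / (z x * sqrt pi) * sqrt P / F x"
      unfolding R_def using Fpos[of x] sP by (intro divide_right_mono mult_right_mono) auto
    also have "\<dots> = M / (x + 2 * \<beta> * t)"
    proof -
      have d: "0 < x + 2 * \<beta> * t" using x assms by (simp add: add_pos_pos)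
      have "\<beta> / (2 * \<gamma>) * F x / (z x * sqrt pi) * sqrt P / F x = \<beta> / (2 * \<gamma>) / (z x * sqrt pi) * sqrt P"
        using Fpos[of x] by simp
      also have "\<dots> = M / (x + 2 * \<beta> * t)"
        using d T by (simp add: M_def z_def field_simps)
      finally show ?thesis .
    qed
    finally show ?thesis using r0 by simp
  qed
  have Rlim: "(R \<longlongrightarrow> 0) at_top"
  proof (rule tendsto_sandwich[of "\<lambda>_. 0" _ _ "\<lambda>x. M / (x + 2 * \<beta> * t)"])
    show "\<forall>\<^sub>F x in at_top. 0 \<le> R x" using eventually_gt_at_top[of 0] by (rule eventually_mono) (use Rb in blast)
    show "\<forall>\<^sub>F x in at_top. R x \<le> M / (x + 2 * \<beta> * t)" using eventually_gt_at_top[of 0] by (rule eventually_mono) (use Rb in blast)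
    show "((\<lambda>x. M / (x + 2 * \<beta> * t)) \<longlongrightarrow> 0) at_top" by real_asymp
  qed simp
  have Eeq: "E x = exp (- (2 * c * x + c\<^sup>2) / T)" for x
    unfolding E_def F_def using T by (simp add: exp_diff[symmetric] power2_eq_square field_simps)
  have Elim: "(E \<longlongrightarrow> 0) at_top"
  proof -
    have "filterlim (\<lambda>x. - (2 * c * x + c\<^sup>2) / T) at_bot at_top"
      using c T by real_asymp
    then have "((\<lambda>x. exp (- (2 * c * x + c\<^sup>2) / T)) \<longlongrightarrow> 0) at_top"
      using exp_at_bot filterlim_compose by blast
    then show ?thesis by (simp add: Eeq[abs_def])
  qed
  have evR: "\<forall>\<^sub>F x in at_top. R x < 1"
    using Rlim by (rule order_tendstoD) simp
  have nz: "\<forall>\<^sub>F x in at_top. u_exact \<gamma> \<beta> b x t \<noteq> 0"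
    using evR by (rule eventually_mono) (use K P sP Fpos in \<open>simp add: ue less_imp_neq[symmetric]\<close>)
  have ratio: "\<forall>\<^sub>F x in at_top. (u_EBC \<gamma> \<beta> b x t - u_exact \<gamma> \<beta> b x t) / u_exact \<gamma> \<beta> b x t
                 = 1/2 * (1 - E x) / (1 - R x) - 1"
    using evR
  proof (rule eventually_mono)
    fix x assume "R x < 1"
    then have h: "1 - R x \<noteq> 0" by simp
    have sq: "sqrt P * sqrt P = P" using P by simp
    show "(u_EBC \<gamma> \<beta> b x t - u_exact \<gamma> \<beta> b x t) / u_exact \<gamma> \<beta> b x t
                 = 1/2 * (1 - E x) / (1 - R x) - 1"
      unfolding ue ub using ratio_alg[of K P "sqrt P" "F x" "1 - R x" "1 - E x"] K P sP Fpos[of x] h by simp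
  qed
  have "((\<lambda>x. \<bar>1/2 * (1 - E x) / (1 - R x) - 1\<bar>) \<longlongrightarrow> \<bar>1/2 * (1 - 0) / (1 - 0) - 1\<bar>) at_top"
    by (intro tendsto_intros Elim Rlim) simp
  then have "((\<lambda>x. \<bar>1/2 * (1 - E x) / (1 - R x) - 1\<bar>) \<longlongrightarrow> 1/2) at_top" by simp
  then have "((\<lambda>x. \<bar>(u_EBC \<gamma> \<beta> b x t - u_exact \<gamma> \<beta> b x t) / u_exact \<gamma> \<beta> b x t\<bar>) \<longlongrightarrow> 1/2) at_top"
    by (rule Lim_transform_eventually) (rule eventually_mono[OF ratio], simp only:)
  with nz show ?thesis by blast
qed

end
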